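(* Let $W$ be a nonnegative, integer-valued random variable with $p=\mathbb{P}(W=0)$. Let $N\sim\mathrm{Geom}(p)$ and suppose that either $W\leq_{hr}N$ or $N\leq_{hr}W$. Then $$d_{TV}(\mathcal{L}(W),\mathcal{L}(N))\leq\left|1-p(1+\mathbb{E}W)\right|.$$
   Context: $N\sim\mathrm{Geom}(p)$ means $\mathbb{P}(N=k)=p(1-p)^k$, $k\ge0$. For nonnegative integer-valued $T$, $r_T(j)=\mathbb{P}(T=j)/\mathbb{P}(T>j)$; $T\leq_{hr}U$ (hazard rate order) means $r_T(j)\geq r_U(j)$ for all $j$. $d_{TV}(\mathcal{L}(U),\mathcal{L}(V))=\sup_{A\subseteq\{0,1,2,\ldots\}}|\mathbb{P}(U\in A)-\mathbb{P}(V\in A)|$. *)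

theory Defs
  imports "HOL-Probability.Probability"
begin

definition hazard_rate :: "nat pmf \<Rightarrow> nat \<Rightarrow> ereal" where
  "hazard_rate T j =
     (if measure_pmf.prob T {j<..} = 0 then \<infinity>
      else ereal (pmf T j / measure_pmf.prob T {j<..}))"

definition hr_le :: "nat pmf \<Rightarrow> nat pmf \<Rightarrow> bool" where
  "hr_le T U \<longleftrightarrow> (\<forall>j. hazard_rate T j \<ge> hazard_rate U j)"

definition dTV :: "nat pmf \<Rightarrow> nat pmf \<Rightarrow> real" where
  "dTV U V = (SUP A :: nat set. \<bar>measure_pmf.prob U A - measure_pmf.prob V A\<bar>)"

definition mean_ereal :: "nat pmf \<Rightarrow> ereal" where
  "mean_ereal T = enn2ereal (\<integral>\<^sup>+ x. ennreal (real x) \<partial>measure_pmf T)"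

end

theory Submission imports Defs begin

lemma pcompl: "measure_pmf.prob T (UNIV - A) = 1 - measure_pmf.prob T A"
  using measure_pmf.prob_compl[of A T] by simp

abbreviation S :: "nat pmf \<Rightarrow> nat \<Rightarrow> real" where "S T j \<equiv> measure_pmf.prob T {j<..}"

lemma S_eq: "S T j = 1 - (\<Sum>i\<le>j. pmf T i)"
proof -
  have "{j<..} = UNIV - {..j}" by auto
  hence "S T j = 1 - measure_pmf.prob T {..j}"
    by (simp add: pcompl)
  thus ?thesis by (simp add: measure_measure_pmf_finite)
qed

lemma S_Suc: "S T j = pmf T (Suc j) + S T (Suc j)"
  by (simp add: S_eq)

lemma S_0: "S T 0 = 1 - pmf T 0"
  by (simp add: S_eq)

lemma tail_sum: "(\<integral>\<^sup>+x. ennreal (real x) \<partial>measure_pmf T) = (\<Sum>j. ennreal (S T j))"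
proof -
  have eq: "ennreal (real x) = (\<Sum>j. indicator {j<..} x :: ennreal)" for x :: nat
  proof -
    have "(\<Sum>j. indicator {j<..} x :: ennreal) = (\<Sum>j<x. indicator {j<..} x)"
      by (rule suminf_finite) auto
    also have "\<dots> = (\<Sum>j<x. 1)" by (rule sum.cong) auto
    finally show ?thesis by (simp add: ennreal_of_nat_eq_real_of_nat)
  qed
  have "(\<integral>\<^sup>+x. ennreal (real x) \<partial>measure_pmf T) = (\<integral>\<^sup>+x. (\<Sum>j. indicator {j<..} x :: ennreal) \<partial>measure_pmf T)"
    by (simp add: eq)
  also have "\<dots> = (\<Sum>j. \<integral>\<^sup>+x. indicator {j<..} x \<partial>measure_pmf T)"
    by (rule nn_integral_suminf) simp
  also have "\<dots> = (\<Sum>j. ennreal (S T j))"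
    by (simp add: measure_pmf.emeasure_eq_measure)
  finally show ?thesis .
qed

lemma diff_bound:
  fixes X Y :: "nat pmf" and c :: "nat \<Rightarrow> real"
  assumes "\<And>j. pmf X j - pmf Y j \<le> c j" "\<And>j. 0 \<le> c j" "summable c"
  shows "measure_pmf.prob X A - measure_pmf.prob Y A \<le> suminf c"
proof -
  have cs: "Infinite_Set_Sum.abs_summable_on c UNIV" using assms(2,3) by (simp add: abs_summable_on_nat_iff')
  have "measure_pmf.prob X A - measure_pmf.prob Y A = infsetsum (\<lambda>j. pmf X j - pmf Y j) A"
    by (simp add: measure_pmf_conv_infsetsum infsetsum_diff[OF pmf_abs_summable pmf_abs_summable])
  also have "\<dots> \<le> infsetsum c UNIV"
    by (rule infsetsum_mono_neutral_left) (use assms cs in auto)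
  also have "\<dots> = suminf c" using cs by (simp add: infsetsum_nat')
  finally show ?thesis .
qed

lemma tv_bound:
  fixes X Y :: "nat pmf" and c :: "nat \<Rightarrow> real"
  assumes "\<And>j. pmf X j - pmf Y j \<le> c j" "\<And>j. 0 \<le> c j" "summable c"
  shows "dTV Y X \<le> suminf c"
  unfolding dTV_def
proof (rule cSUP_least)
  fix A :: "nat set"
  have 1: "measure_pmf.prob X A - measure_pmf.prob Y A \<le> suminf c" by (rule diff_bound[OF assms])
  have 2: "measure_pmf.prob X (UNIV - A) - measure_pmf.prob Y (UNIV - A) \<le> suminf c" by (rule diff_bound[OF assms])
  show "\<bar>measure_pmf.prob Y A - measure_pmf.prob X A\<bar> \<le> suminf c"
    using 1 2 by (simp add: pcompl)
qed simp

lemma dTV_sym: "dTV X Y = dTV Y X"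
  unfolding dTV_def by (simp add: abs_minus_commute)

lemma S_geom: assumes "0 < p" "p < 1" shows "S (geometric_pmf p) j = (1-p)^(Suc j)"
proof (induction j)
  case 0 then show ?case using assms by (simp add: S_0)
next
  case (Suc j)
  have "S (geometric_pmf p) j = pmf (geometric_pmf p) (Suc j) + S (geometric_pmf p) (Suc j)" by (rule S_Suc)
  then show ?case using Suc assms by (simp add: algebra_simps)
qed

lemma hr_geom: assumes "0 < p" "p < 1"
  shows "hazard_rate (geometric_pmf p) j = ereal (p / (1-p))"
proof -
  have "(1-p)^j * p / (1-p)^(Suc j) = p / (1-p)" using assms by (simp add: field_simps)
  thus ?thesis using assms unfolding hazard_rate_def by (simp add: S_geom)
qed

lemma hazA: assumes "hr_le W (geometric_pmf p)" "0 < p" "p < 1"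
  shows "S W (Suc j) \<le> (1-p) * S W j"
proof (cases "S W (Suc j) = 0")
  case True then show ?thesis using assms by (simp add: measure_nonneg)
next
  case False
  have pos: "S W (Suc j) > 0" using False by (simp add: order_le_neq_trans measure_nonneg)
  have "hazard_rate W (Suc j) \<ge> ereal (p/(1-p))"
    using assms(1) hr_geom[OF assms(2,3)] unfolding hr_le_def by metis
  hence "p/(1-p) \<le> pmf W (Suc j) / S W (Suc j)" using False unfolding hazard_rate_def by simp
  hence "p/(1-p) * S W (Suc j) \<le> pmf W (Suc j)" using pos by (simp add: pos_le_divide_eq)
  hence "p * S W (Suc j) \<le> (1-p) * pmf W (Suc j)" using assms by (simp add: field_simps)
  thus ?thesis using S_Suc[of W j] by (simp add: algebra_simps)
qed

lemma hazB: assumes "hr_le (geometric_pmf p) W" "0 < p" "p < 1"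
  shows "(1-p) * S W j \<le> S W (Suc j)"
proof -
  have h: "hazard_rate W (Suc j) \<le> ereal (p/(1-p))"
    using assms(1) hr_geom[OF assms(2,3)] unfolding hr_le_def by metis
  have False_: "S W (Suc j) \<noteq> 0"
  proof
    assume "S W (Suc j) = 0" then show False using h unfolding hazard_rate_def by simp
  qed
  have pos: "S W (Suc j) > 0" using False_ by (simp add: order_le_neq_trans measure_nonneg)
  have "pmf W (Suc j) / S W (Suc j) \<le> p/(1-p)" using h False_ unfolding hazard_rate_def by simp
  hence "pmf W (Suc j) \<le> p/(1-p) * S W (Suc j)" using pos by (simp add: pos_divide_le_eq)
  hence "(1-p) * pmf W (Suc j) \<le> p * S W (Suc j)" using assms by (simp add: field_simps)
  thus ?thesis using S_Suc[of W j] by (simp add: algebra_simps)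
qed

lemma main_real:
  fixes W :: "nat pmf"
  defines "p \<equiv> pmf W 0"
  assumes p: "0 < p" "p < 1"
    and hr: "hr_le W (geometric_pmf p) \<or> hr_le (geometric_pmf p) W"
    and sm: "summable (S W)"
  shows "dTV W (geometric_pmf p) \<le> \<bar>1 - p * (1 + suminf (S W))\<bar>"
proof -
  define q where "q = 1 - p"
  define E where "E = suminf (S W)"
  have q: "0 < q" "q < 1" using p by (auto simp: q_def)
  have gs: "summable (\<lambda>j. q^(Suc j))" using q by simp
  have gsum: "(\<Sum>j. q^(Suc j)) = q / p"
  proof -
    have "(\<Sum>j. q^(Suc j)) = q * (\<Sum>j. q^j)" using q
      by (simp add: suminf_mult[symmetric] summable_geometric)
    also have "\<dots> = q / (1 - q)" using q by (simp add: suminf_geometric)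
    finally show ?thesis by (simp add: q_def)
  qed
  have S0: "S W 0 = q" by (simp add: S_0 q_def p_def)
  show ?thesis
  proof (cases "hr_le W (geometric_pmf p)")
    case True
    define D where "D j = q^(Suc j) - S W j" for j
    have hz: "S W (Suc j) \<le> q * S W j" for j using hazA[OF True p] by (simp add: q_def)
    have Dnn: "0 \<le> D j" for j
    proof (induction j)
      case 0 then show ?case by (simp add: D_def S0)
    next
      case (Suc j)
      have "q * D j \<le> D (Suc j)" using hz[of j] by (simp add: D_def algebra_simps)
      moreover have "0 \<le> q * D j" using Suc q by simp
      ultimately show ?case by linarith
    qed
    define c where "c j = (case j of 0 \<Rightarrow> 0 | Suc i \<Rightarrow> p * D i)" for j
    have cSuc: "(\<lambda>n. c (Suc n)) = (\<lambda>n. p * D n)" by (simp add: c_def)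
    have Ds: "summable D" unfolding D_def by (intro summable_diff gs sm)
    have cs: "summable c" using Ds by (subst summable_Suc_iff[symmetric]) (simp add: cSuc)
    have "suminf c = p * suminf D"
      using suminf_split_head[OF cs] by (simp add: cSuc suminf_mult[OF Ds] c_def)
    also have "suminf D = q / p - E" unfolding D_def E_def
      using suminf_diff[OF gs sm] gsum by simp
    finally have "suminf c = p * (q/p) - p * E" by (simp add: right_diff_distrib)
    moreover have "p * (q/p) = q" using p by simp
    ultimately have csum: "suminf c = 1 - p * (1 + E)" by (simp add: q_def algebra_simps)
    have cb: "pmf (geometric_pmf p) j - pmf W j \<le> c j" for j
    proof (cases j)
      case 0 then show ?thesis using p by (simp add: c_def p_def)
    next
      case (Suc i)
      have "S W i = pmf W (Suc i) + S W (Suc i)" by (rule S_Suc)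
      then show ?thesis using Suc hz[of i] p by (simp add: c_def D_def q_def algebra_simps)
    qed
    have cnn: "0 \<le> c j" for j using Dnn p by (simp add: c_def split: nat.split)
    have "dTV W (geometric_pmf p) \<le> suminf c" by (rule tv_bound[OF cb cnn cs])
    thus ?thesis using csum by (simp add: E_def)
  next
    case False
    hence hB: "hr_le (geometric_pmf p) W" using hr by simp
    define D where "D j = S W j - q^(Suc j)" for j
    have hz: "q * S W j \<le> S W (Suc j)" for j using hazB[OF hB p] by (simp add: q_def)
    have Dnn: "0 \<le> D j" for j
    proof (induction j)
      case 0 then show ?case by (simp add: D_def S0)
    next
      case (Suc j)
      have "q * D j \<le> D (Suc j)" using hz[of j] by (simp add: D_def algebra_simps)
      moreover have "0 \<le> q * D j" using Suc q by simp
      ultimately show ?case by linarith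
    qed
    define c where "c j = (case j of 0 \<Rightarrow> 0 | Suc i \<Rightarrow> p * D i)" for j
    have cSuc: "(\<lambda>n. c (Suc n)) = (\<lambda>n. p * D n)" by (simp add: c_def)
    have Ds: "summable D" unfolding D_def by (intro summable_diff gs sm)
    have cs: "summable c" using Ds by (subst summable_Suc_iff[symmetric]) (simp add: cSuc)
    have "suminf c = p * suminf D"
      using suminf_split_head[OF cs] by (simp add: cSuc suminf_mult[OF Ds] c_def)
    also have "suminf D = E - q / p" unfolding D_def E_def
      using suminf_diff[OF sm gs] gsum by simp
    finally have "suminf c = p * E - p * (q/p)" by (simp add: right_diff_distrib)
    moreover have "p * (q/p) = q" using p by simp
    ultimately have csum: "suminf c = - (1 - p * (1 + E))" by (simp add: q_def algebra_simps)
    have cb: "pmf W j - pmf (geometric_pmf p) j \<le> c j" for j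
    proof (cases j)
      case 0 then show ?thesis using p by (simp add: c_def p_def)
    next
      case (Suc i)
      have "S W i = pmf W (Suc i) + S W (Suc i)" by (rule S_Suc)
      then show ?thesis using Suc hz[of i] p by (simp add: c_def D_def q_def algebra_simps)
    qed
    have cnn: "0 \<le> c j" for j using Dnn p by (simp add: c_def split: nat.split)
    have "dTV (geometric_pmf p) W \<le> suminf c" by (rule tv_bound[OF cb cnn cs])
    thus ?thesis using csum by (simp add: E_def dTV_sym)
  qed
qed

lemma pmf1: assumes "pmf W 0 = 1" shows "W = return_pmf (0::nat)"
proof -
  have "pmf W j = 0" if "j \<noteq> 0" for j
  proof -
    have "measure_pmf.prob W {0, j} = pmf W 0 + pmf W j"
      using that by (simp add: measure_measure_pmf_finite)
    moreover have "measure_pmf.prob W {0, j} \<le> 1" by simp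
    ultimately show ?thesis using assms pmf_nonneg[of W j] by simp
  qed
  hence "set_pmf W \<subseteq> {0}" by (auto simp: set_pmf_eq)
  thus ?thesis by (simp add: set_pmf_subset_singleton)
qed

theorem theorem5p2:
  fixes W :: "nat pmf"
  defines "p \<equiv> pmf W 0"
  assumes p_pos: "0 < p"
    and hr: "hr_le W (geometric_pmf p) \<or> hr_le (geometric_pmf p) W"
  shows "ereal (dTV W (geometric_pmf p)) \<le> \<bar>1 - ereal p * (1 + mean_ereal W)\<bar>"
proof (cases "p = 1")
  case True
  hence "W = return_pmf 0" using pmf1 p_def by simp
  hence "dTV W (geometric_pmf p) = 0" using True by (simp add: dTV_def)
  thus ?thesis using abs_ereal_pos by (simp add: zero_ereal_def[symmetric])
next
  case False
  have p1: "p < 1" using False pmf_le_1[of W 0] p_def by linarith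
  show ?thesis
  proof (cases "(\<Sum>j. ennreal (S W j)) = \<top>")
    case True
    hence "mean_ereal W = \<infinity>" by (simp add: mean_ereal_def tail_sum)
    moreover have "\<bar>(1::ereal) - \<infinity>\<bar> = \<infinity>" by (simp add: one_ereal_def)
    ultimately show ?thesis using p_pos by simp
  next
    case False
    have sm: "summable (S W)" by (rule summable_suminf_not_top) (use False in \<open>auto simp: measure_nonneg\<close>)
    have "mean_ereal W = ereal (suminf (S W))"
      unfolding mean_ereal_def tail_sum
      by (subst suminf_ennreal2) (use sm in \<open>auto simp: measure_nonneg suminf_nonneg\<close>)
    moreover have "dTV W (geometric_pmf p) \<le> \<bar>1 - p * (1 + suminf (S W))\<bar>"
      using main_real[OF _ _ _ sm] p_pos p1 hr unfolding p_def by blast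
    moreover have "1 - ereal p * (1 + ereal (suminf (S W))) = ereal (1 - p * (1 + suminf (S W)))"
      by (simp add: one_ereal_def)
    ultimately show ?thesis by simp
  qed
qed

end
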